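(* Let $\mathbb{P} = \mathbb{P}(c_1,c_2,c_3,c_4)$ be a weighted projective space with homogeneous coordinates $s_1,s_2,s_3,s_4$, and suppose $c_1 \ge c_2$ and $c_1 > c_i$ for $i=3,4$. Let $g_1,g_2 \in \mathbb{C}[s_3,s_4]$ be homogeneous of degree $c_1+c_2$, and suppose there is an automorphism $\sigma$ of $\mathbb{P}$ inducing an isomorphism \[ \sigma|_{H_1}\colon H_1 := (s_1 s_2 + g_1(s_3,s_4) = 0) \xrightarrow{\ \cong\ } H_2 := (s_1 s_2 + g_2(s_3,s_4) = 0) \] between these weighted hypersurfaces in $\mathbb{P}$. Then there is an automorphism $\tau$ of $\mathbb{P}(c_3,c_4)$ (with coordinates $s_3,s_4$) such that $g_1 = \tau^* g_2$. *)

theory Defs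
  imports Complex_Main
begin

text \<open>Points of the affine cone over a weighted projective space with coordinates
  indexed by a finite set V of variables are represented as functions
  x :: nat \<Rightarrow> complex, with x i = 0 for i outside V.\<close>

definition cone_pts :: "nat set \<Rightarrow> (nat \<Rightarrow> complex) set" where
  "cone_pts V = {x. \<forall>i. i \<notin> V \<longrightarrow> x i = 0}"

definition wt_hom_poly ::
  "nat set \<Rightarrow> (nat \<Rightarrow> nat) \<Rightarrow> nat \<Rightarrow> ((nat \<Rightarrow> complex) \<Rightarrow> complex) \<Rightarrow> bool" where
  "wt_hom_poly V w d f \<longleftrightarrow>
     (\<exists>a :: (nat \<Rightarrow> nat) \<Rightarrow> complex.
        finite {e. a e \<noteq> 0} \<and>
        (\<forall>e. a e \<noteq> 0 \<longrightarrow> (\<forall>i. i \<notin> V \<longrightarrow> e i = 0) \<and> (\<Sum>i\<in>V. w i * e i) = d) \<and>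
        (\<forall>x. f x = (\<Sum>e\<in>{e. a e \<noteq> 0}. a e * (\<Prod>i\<in>V. x i ^ e i))))"

definition graded_map :: "nat set \<Rightarrow> (nat \<Rightarrow> nat) \<Rightarrow> ((nat \<Rightarrow> complex) \<Rightarrow> (nat \<Rightarrow> complex)) \<Rightarrow> bool" where
  "graded_map V w \<phi> \<longleftrightarrow>
     (\<forall>i\<in>V. wt_hom_poly V w (w i) (\<lambda>x. \<phi> x i)) \<and> (\<forall>x i. i \<notin> V \<longrightarrow> \<phi> x i = 0)"

text \<open>An automorphism of the weighted projective space P(w_i : i in V), given (as
  usual) by a graded automorphism of its homogeneous coordinate ring, i.e. an
  invertible graded map whose inverse is again graded.\<close>

definition wps_aut :: "nat set \<Rightarrow> (nat \<Rightarrow> nat) \<Rightarrow> ((nat \<Rightarrow> complex) \<Rightarrow> (nat \<Rightarrow> complex)) \<Rightarrow> bool" where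
  "wps_aut V w \<phi> \<longleftrightarrow> graded_map V w \<phi> \<and>
     (\<exists>\<psi>. graded_map V w \<psi> \<and>
        (\<forall>x\<in>cone_pts V. \<psi> (\<phi> x) = x \<and> \<phi> (\<psi> x) = x))"

end

theory Submission imports Defs "HOL-Analysis.Complex_Transcendental" begin

lemma whp_local:
  assumes "wt_hom_poly V w d f" "\<forall>i\<in>V. x i = y i"
  shows "f x = f y"
proof -
  obtain a where a: "finite {e. a e \<noteq> 0}"
     "\<forall>x. f x = (\<Sum>e\<in>{e. a e \<noteq> 0}. a e * (\<Prod>i\<in>V. x i ^ e i))"
    using assms(1) unfolding wt_hom_poly_def by blast
  show ?thesis using assms(2) unfolding a(2)[rule_format] by (intro sum.cong refl arg_cong2[where f="(*)"] prod.cong) auto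
qed

lemma whp_homog:
  assumes "wt_hom_poly V w d f" "finite V"
  shows "f (\<lambda>i. t ^ w i * x i) = t ^ d * f x"
proof -
  obtain a where a: "finite {e. a e \<noteq> 0}"
     "\<forall>e. a e \<noteq> 0 \<longrightarrow> (\<forall>i. i \<notin> V \<longrightarrow> e i = 0) \<and> (\<Sum>i\<in>V. w i * e i) = d"
     "\<forall>x. f x = (\<Sum>e\<in>{e. a e \<noteq> 0}. a e * (\<Prod>i\<in>V. x i ^ e i))"
    using assms(1) unfolding wt_hom_poly_def by blast
  have "a e * (\<Prod>i\<in>V. (t ^ w i * x i) ^ e i) = t ^ d * (a e * (\<Prod>i\<in>V. x i ^ e i))"
    if "a e \<noteq> 0" for e
  proof -
    have "(\<Prod>i\<in>V. (t ^ w i * x i) ^ e i) = (\<Prod>i\<in>V. t ^ (w i * e i)) * (\<Prod>i\<in>V. x i ^ e i)"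
      by (simp add: power_mult_distrib power_mult prod.distrib)
    also have "(\<Prod>i\<in>V. t ^ (w i * e i)) = t ^ d"
      using a(2) that by (simp add: power_sum[symmetric])
    finally show ?thesis by simp
  qed
  then show ?thesis unfolding a(3)[rule_format] sum_distrib_left by (intro sum.cong) auto
qed

lemma whp_scal:
  assumes "wt_hom_poly V w d f"
  shows "wt_hom_poly V w d (\<lambda>x. k * f x)"
proof (cases "k = 0")
  case True
  then show ?thesis unfolding wt_hom_poly_def by (intro exI[of _ "\<lambda>e. 0"]) auto
next
  case False
  obtain a where a: "finite {e. a e \<noteq> 0}"
     "\<forall>e. a e \<noteq> 0 \<longrightarrow> (\<forall>i. i \<notin> V \<longrightarrow> e i = 0) \<and> (\<Sum>i\<in>V. w i * e i) = d"
     "\<forall>x. f x = (\<Sum>e\<in>{e. a e \<noteq> 0}. a e * (\<Prod>i\<in>V. x i ^ e i))"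
    using assms(1) unfolding wt_hom_poly_def by blast
  show ?thesis unfolding wt_hom_poly_def
    apply (intro exI[of _ "\<lambda>e. k * a e"])
    using a False by (auto simp: sum_distrib_left mult.assoc)
qed

lemma whp_cont:
  assumes "wt_hom_poly V w d f" "\<forall>i\<in>V. continuous F (\<lambda>t. u t i)"
  shows "continuous F (\<lambda>t. f (u t))"
proof -
  obtain a where a: "finite {e. a e \<noteq> 0}"
     "\<forall>x. f x = (\<Sum>e\<in>{e. a e \<noteq> 0}. a e * (\<Prod>i\<in>V. x i ^ e i))"
    using assms(1) unfolding wt_hom_poly_def by blast
  show ?thesis unfolding a(2)[rule_format]
    using assms(2) by (intro continuous_intros) auto
qed


lemma whp_restrict:
  assumes "wt_hom_poly V w d f" "W \<subseteq> V" "finite V"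
  shows "wt_hom_poly W w d (\<lambda>x. f (\<lambda>i. if i \<in> W then x i else 0))"
proof -
  obtain a where a: "finite {e. a e \<noteq> 0}"
     "\<forall>e. a e \<noteq> 0 \<longrightarrow> (\<forall>i. i \<notin> V \<longrightarrow> e i = 0) \<and> (\<Sum>i\<in>V. w i * e i) = d"
     "\<forall>x. f x = (\<Sum>e\<in>{e. a e \<noteq> 0}. a e * (\<Prod>i\<in>V. x i ^ e i))"
    using assms(1) unfolding wt_hom_poly_def by blast
  define a' where "a' e = (if (\<forall>i. i \<notin> W \<longrightarrow> e i = 0) then a e else 0)" for e
  have sub: "{e. a' e \<noteq> 0} = {e. a e \<noteq> 0} \<inter> {e. \<forall>i. i \<notin> W \<longrightarrow> e i = 0}"
    unfolding a'_def by auto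
  have fin: "finite {e. a' e \<noteq> 0}" unfolding sub using a(1) by auto
  have deg: "(\<forall>i. i \<notin> W \<longrightarrow> e i = 0) \<and> (\<Sum>i\<in>W. w i * e i) = d" if "a' e \<noteq> 0" for e
  proof -
    have s: "\<forall>i. i \<notin> W \<longrightarrow> e i = 0" "a e \<noteq> 0" using that unfolding a'_def by (auto split: if_splits)
    have "(\<Sum>i\<in>V. w i * e i) = (\<Sum>i\<in>W. w i * e i)"
      using s(1) assms(2,3) by (intro sum.mono_neutral_right) auto
    then show ?thesis using s a(2) by auto
  qed
  have val: "f (\<lambda>i. if i \<in> W then x i else 0) = (\<Sum>e\<in>{e. a' e \<noteq> 0}. a' e * (\<Prod>i\<in>W. x i ^ e i))" for x
  proof -
    have t: "a e * (\<Prod>i\<in>V. (if i \<in> W then x i else 0) ^ e i) = a' e * (\<Prod>i\<in>W. x i ^ e i)"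
      if "a e \<noteq> 0" for e
    proof (cases "\<forall>i. i \<notin> W \<longrightarrow> e i = 0")
      case True
      have "(\<Prod>i\<in>V. (if i \<in> W then x i else 0) ^ e i) = (\<Prod>i\<in>W. (if i \<in> W then x i else 0) ^ e i)"
        using True assms(2,3) by (intro prod.mono_neutral_right) auto
      then show ?thesis using True unfolding a'_def by simp
    next
      case False
      then obtain j where j: "j \<notin> W" "e j \<noteq> 0" by auto
      then have "j \<in> V" using a(2) that by (metis less_numeral_extra(3))
      then have "(\<Prod>i\<in>V. (if i \<in> W then x i else 0) ^ e i) = 0"
        using j assms(3) by (intro prod_zero) auto
      then show ?thesis using False unfolding a'_def by auto
    qed
    have "f (\<lambda>i. if i \<in> W then x i else 0) = (\<Sum>e\<in>{e. a e \<noteq> 0}. a' e * (\<Prod>i\<in>W. x i ^ e i))"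
      unfolding a(3)[rule_format] using t by (intro sum.cong) auto
    also have "\<dots> = (\<Sum>e\<in>{e. a' e \<noteq> 0}. a' e * (\<Prod>i\<in>W. x i ^ e i))"
      using a(1) unfolding sub by (intro sum.mono_neutral_right) (auto simp: a'_def)
    finally show ?thesis .
  qed
  show ?thesis unfolding wt_hom_poly_def
    using fin deg val by (intro exI[of _ a']) auto
qed

lemma whp_affine:
  assumes "wt_hom_poly V w d f" "finite V" "j \<in> V" "\<forall>i\<in>V. w i > 0" "d \<le> w j"
  shows "\<exists>b. (d < w j \<longrightarrow> b = 0) \<and> (\<forall>x. f x = f (x(j:=0)) + b * x j)"
proof -
  obtain a where a: "finite {e. a e \<noteq> 0}"
     "\<forall>e. a e \<noteq> 0 \<longrightarrow> (\<forall>i. i \<notin> V \<longrightarrow> e i = 0) \<and> (\<Sum>i\<in>V. w i * e i) = d"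
     "\<forall>x. f x = (\<Sum>e\<in>{e. a e \<noteq> 0}. a e * (\<Prod>i\<in>V. x i ^ e i))"
    using assms(1) unfolding wt_hom_poly_def by blast
  define dj where "dj = (\<lambda>i. if i = j then 1 else 0::nat)"
  have sdj: "(\<Sum>i\<in>V. w i * dj i) = w j"
    unfolding dj_def using assms(2,3) by (simp add: if_distrib sum.delta cong: if_cong)
  have isdj: "e = dj" if "a e \<noteq> 0" "e j \<noteq> 0" for e
  proof -
    have S: "(\<Sum>i\<in>V. w i * e i) = d" and out: "\<forall>i. i \<notin> V \<longrightarrow> e i = 0" using a(2) that by auto
    have split: "(\<Sum>i\<in>V. w i * e i) = w j * e j + (\<Sum>i\<in>V-{j}. w i * e i)"
      using assms(2,3) by (simp add: sum.remove)
    have "w j * e j \<ge> w j" using that(2) by simp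
    then have z: "(\<Sum>i\<in>V-{j}. w i * e i) = 0" and ej: "w j * e j \<le> w j"
      using S split assms(5) by linarith+
    have "e j = 1" using ej that(2) assms(3,4) by (metis le_neq_implies_less less_one mult.right_neutral mult_le_cancel1 nat_less_le not_gr0)
    moreover have "e i = 0" if "i \<in> V" "i \<noteq> j" for i
      using z that assms(2,4) by (simp add: sum_eq_0_iff) (metis DiffI empty_iff insert_iff less_numeral_extra(3))
    ultimately show ?thesis unfolding dj_def using out by (auto simp: fun_eq_iff)
  qed
  define b where "b = a dj"
  have b0: "d < w j \<longrightarrow> b = 0" unfolding b_def using a(2) sdj by fastforce
  have "f x = f (x(j:=0)) + b * x j" for x
  proof -
    have t: "a e * (\<Prod>i\<in>V. x i ^ e i) = a e * (\<Prod>i\<in>V. (x(j:=0)) i ^ e i) + (if e = dj then b * x j else 0)"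
      if "a e \<noteq> 0" for e
    proof (cases "e j = 0")
      case True
      then have "e \<noteq> dj" unfolding dj_def by (auto simp: fun_eq_iff)
      moreover have "(\<Prod>i\<in>V. x i ^ e i) = (\<Prod>i\<in>V. (x(j:=0)) i ^ e i)"
        using True by (intro prod.cong) auto
      ultimately show ?thesis by simp
    next
      case False
      then have e: "e = dj" using isdj that by auto
      have p1: "(\<Prod>i\<in>V. x i ^ e i) = x j" unfolding e dj_def using assms(2,3)
        by (simp add: if_distrib prod.delta cong: if_cong)
      have p2: "(\<Prod>i\<in>V. (x(j:=0)) i ^ e i) = 0" unfolding e dj_def using assms(2,3)
        by (intro prod_zero) auto
      show ?thesis using p1 p2 e b_def by simp
    qed
    have "f x = (\<Sum>e\<in>{e. a e \<noteq> 0}. a e * (\<Prod>i\<in>V. (x(j:=0)) i ^ e i) + (if e = dj then b * x j else 0))"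
      unfolding a(3)[rule_format] using t by (intro sum.cong) auto
    also have "\<dots> = f (x(j:=0)) + (\<Sum>e\<in>{e. a e \<noteq> 0}. (if e = dj then b * x j else 0))"
      unfolding a(3)[rule_format] sum.distrib by simp
    also have "(\<Sum>e\<in>{e. a e \<noteq> 0}. (if e = dj then b * x j else 0)) = b * x j"
      using a(1) by (simp add: sum.delta' b_def)
    finally show ?thesis .
  qed
  then show ?thesis using b0 by blast
qed


lemma quad_zero:
  fixes a b p q k :: complex
  assumes "\<forall>t. (a*t+p)*(b*t+q)+k = 0"
  shows "a * b = 0"
proof -
  have "(a*0+p)*(b*0+q)+k = 0" "(a*1+p)*(b*1+q)+k = 0" "(a*(-1)+p)*(b*(-1)+q)+k = 0"
    using assms by blast+
  moreover have "2*(a*b) = ((a*1+p)*(b*1+q)+k) + ((a*(-1)+p)*(b*(-1)+q)+k) - 2*((a*0+p)*(b*0+q)+k)"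
    by (simp add: algebra_simps)
  ultimately have "2 * (a * b) = 0" by simp
  then show ?thesis by simp
qed

lemma cont_zero:
  fixes \<phi> :: "complex \<Rightarrow> complex"
  assumes "continuous (at 0) \<phi>" "\<forall>t. t \<noteq> 0 \<longrightarrow> \<phi> t = 0"
  shows "\<phi> 0 = 0"
proof -
  have "\<phi> \<midarrow>0\<rightarrow> \<phi> 0" using assms(1) by (simp add: continuous_at)
  moreover have "\<phi> \<midarrow>0\<rightarrow> 0"
    by (rule tendsto_eventually) (auto simp: eventually_at_filter assms(2))
  ultimately show ?thesis by (rule LIM_unique)
qed

lemma nth_root_ex:
  fixes z :: complex
  assumes "z \<noteq> 0" "n > 0"
  shows "\<exists>t. t ^ n = z \<and> t \<noteq> 0"
proof -
  have "exp (Ln z / of_nat n) ^ n = exp (of_nat n * (Ln z / of_nat n))"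
    by (rule exp_of_nat_mult[symmetric])
  also have "\<dots> = z" using assms by simp
  finally show ?thesis by (intro exI[of _ "exp (Ln z / of_nat n)"]) simp
qed


lemma cone_upd: "x \<in> cone_pts V \<Longrightarrow> j \<in> V \<Longrightarrow> x(j:=t) \<in> cone_pts V"
  unfolding cone_pts_def by auto

lemma affine_two:
  fixes p a q r :: complex
  assumes "\<forall>t. (p + a * t) * q + r = 0"
  shows "a * q = 0"
proof -
  have e1: "(p + a * 1) * q + r = 0" and e0: "(p + a * 0) * q + r = 0" using assms by blast+
  have "a * q = ((p + a * 1) * q + r) - ((p + a * 0) * q + r)" by (simp add: algebra_simps)
  also have "\<dots> = 0 - 0" by (simp only: e1 e0)
  finally show ?thesis by simp
qed

lemma rel_alg:
  fixes h a b G X K :: complex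
  assumes "X \<noteq> 0" "(h + a * (- G / X)) * (b * X) + K = 0"
  shows "K = a * b * G - b * X * h"
proof -
  have "(h + a * (- G / X)) * (b * X) = h * b * X - a * b * G" using assms(1)
    by (simp add: field_simps)
  then show ?thesis using assms(2) by (simp add: algebra_simps)
qed

lemma main:
  fixes c :: "nat \<Rightarrow> nat" and g1 g2 :: "(nat \<Rightarrow> complex) \<Rightarrow> complex"
    and \<sigma> \<psi> :: "(nat \<Rightarrow> complex) \<Rightarrow> (nat \<Rightarrow> complex)" and a :: complex
  assumes pos: "\<forall>i\<in>{1,2,3,4}. c i > 0" and c13: "c 3 < c 1" and c14: "c 4 < c 1"
    and g1: "wt_hom_poly {3,4} c (c 1 + c 2) g1"
    and g2: "wt_hom_poly {3,4} c (c 1 + c 2) g2"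
    and \<sigma>g: "graded_map {1,2,3,4} c \<sigma>"
    and \<psi>h: "\<forall>i\<in>{3,4}. wt_hom_poly {1,2,3,4} c (c i) (\<lambda>y. \<psi> y i)"
    and \<psi>c: "\<forall>y i. i \<notin> {1,2,3,4} \<longrightarrow> \<psi> y i = 0"
    and inv: "\<forall>x\<in>cone_pts {1,2,3,4}. \<psi> (\<sigma> x) = x \<and> \<sigma> (\<psi> x) = x"
    and iso: "\<forall>x\<in>cone_pts {1,2,3,4}.
               (x 1 * x 2 + g1 x = 0) \<longleftrightarrow> ((\<sigma> x) 1 * (\<sigma> x) 2 + g2 (\<sigma> x) = 0)"
    and ind2: "\<forall>x. \<sigma> x 2 = \<sigma> (x(1:=0)) 2"
    and aff: "\<forall>x. \<sigma> x 1 = \<sigma> (x(1:=0)) 1 + a * x 1"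
  shows "\<exists>\<tau>. wps_aut {3,4} c \<tau> \<and> (\<forall>x. g1 x = g2 (\<tau> x))"
proof -
  define V where "V = {1,2,3,4::nat}"
  have finV: "finite V" unfolding V_def by simp
  have posV: "\<forall>i\<in>V. c i > 0" using pos unfolding V_def .
  have \<sigma>h: "\<forall>i\<in>V. wt_hom_poly V c (c i) (\<lambda>x. \<sigma> x i)" and \<sigma>c: "\<forall>x i. i \<notin> V \<longrightarrow> \<sigma> x i = 0"
    using \<sigma>g unfolding graded_map_def V_def by auto
  have \<sigma>cone: "\<sigma> x \<in> cone_pts V" for x using \<sigma>c unfolding cone_pts_def by auto
  have \<psi>cone: "\<psi> x \<in> cone_pts V" for x using \<psi>c unfolding cone_pts_def V_def by auto
  have ind34: "\<sigma> x i = \<sigma> (x(1:=0)) i" if "i \<in> {3,4}" for x i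
  proof -
    have "wt_hom_poly V c (c i) (\<lambda>x. \<sigma> x i)" using \<sigma>h that unfolding V_def by auto
    moreover have "c i < c 1" using that c13 c14 by auto
    ultimately obtain b where "b = 0" "\<forall>x. \<sigma> x i = \<sigma> (x(1:=0)) i + b * x 1"
      using whp_affine[of V c "c i" "\<lambda>x. \<sigma> x i" 1] finV posV unfolding V_def by auto
    then show ?thesis by simp
  qed
  have ind\<psi>: "\<psi> x i = \<psi> (x(1:=0)) i" if "i \<in> {3,4}" for x i
  proof -
    have "wt_hom_poly V c (c i) (\<lambda>x. \<psi> x i)" using \<psi>h that unfolding V_def by auto
    moreover have "c i < c 1" using that c13 c14 by auto
    ultimately obtain b where "b = 0" "\<forall>x. \<psi> x i = \<psi> (x(1:=0)) i + b * x 1"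
      using whp_affine[of V c "c i" "\<lambda>x. \<psi> x i" 1] finV posV unfolding V_def by auto
    then show ?thesis by simp
  qed
  have g1loc: "g1 x = g1 y" if "x 3 = y 3" "x 4 = y 4" for x y
    by (rule whp_local[OF g1]) (use that in simp)
  have g2loc: "g2 x = g2 y" if "x 3 = y 3" "x 4 = y 4" for x y
    by (rule whp_local[OF g2]) (use that in simp)
  have isoT: "(t * x 2 + g1 x = 0) \<longleftrightarrow>
      ((\<sigma> (x(1:=0)) 1 + a*t) * \<sigma> (x(1:=0)) 2 + g2 (\<sigma> (x(1:=0))) = 0)"
    if "x \<in> cone_pts V" for x t
  proof -
    have c: "x(1:=t) \<in> cone_pts {1,2,3,4}" using cone_upd[OF that] unfolding V_def by auto
    have e: "(x(1:=t))(1:=0) = x(1:=0)" by simp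
    have "\<sigma> (x(1:=t)) 1 = \<sigma> (x(1:=0)) 1 + a*t" using aff[rule_format, of "x(1:=t)"] by simp
    moreover have "\<sigma> (x(1:=t)) 2 = \<sigma> (x(1:=0)) 2" using ind2[rule_format, of "x(1:=t)"] by simp
    moreover have "g2 (\<sigma> (x(1:=t))) = g2 (\<sigma> (x(1:=0)))"
      using ind34[of 3 "x(1:=t)"] ind34[of 4 "x(1:=t)"] by (intro g2loc) auto
    moreover have "g1 (x(1:=t)) = g1 x" by (intro g1loc) auto
    ultimately show ?thesis using iso[rule_format, OF c] by (simp add: mult.commute)
  qed
  define z0 :: "nat \<Rightarrow> complex" where "z0 = (\<lambda>_. 0)"
  have z0c: "z0 \<in> cone_pts V" unfolding z0_def cone_pts_def by simp
  have a0: "a \<noteq> 0"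
  proof
    assume a0: "a = 0"
    define e1 where "e1 = z0(1:=1)"
    have e1c: "e1 \<in> cone_pts V" unfolding e1_def using cone_upd[OF z0c] V_def by auto
    have "\<sigma> e1 = \<sigma> z0"
    proof
      fix i
      have ee: "e1(1:=0) = z0" unfolding e1_def z0_def by auto
      show "\<sigma> e1 i = \<sigma> z0 i"
      proof (cases "i \<in> V")
        case True
        then consider "i = 1" | "i = 2" | "i \<in> {3,4}" unfolding V_def by auto
        then show ?thesis
          using aff[rule_format, of e1] ind2[rule_format, of e1] ind34[of i e1] a0 ee by cases auto
      qed (use \<sigma>c in auto)
    qed
    then have "e1 = z0" using inv e1c z0c unfolding V_def by metis
    then show False unfolding e1_def z0_def by (metis fun_upd_same one_neq_zero)
  qed
  have s2: "\<sigma> (x(1:=0)) 2 = 0" if "x \<in> cone_pts V" "x 2 = 0" for x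
  proof (cases "g1 x = 0")
    case True
    then have "\<forall>t. (\<sigma> (x(1:=0)) 1 + a*t) * \<sigma> (x(1:=0)) 2 + g2 (\<sigma> (x(1:=0))) = 0"
      using isoT[OF that(1)] that(2) by simp
    then have "a * \<sigma> (x(1:=0)) 2 = 0" by (rule affine_two)
    then show ?thesis using a0 by simp
  next
    case False
    then have nz: "\<forall>t. (\<sigma> (x(1:=0)) 1 + a*t) * \<sigma> (x(1:=0)) 2 + g2 (\<sigma> (x(1:=0))) \<noteq> 0"
      using isoT[OF that(1)] that(2) by simp
    show ?thesis
    proof (rule ccontr)
      assume sn: "\<sigma> (x(1:=0)) 2 \<noteq> 0"
      define hh where "hh = \<sigma> (x(1:=0)) 1"
      define ss where "ss = \<sigma> (x(1:=0)) 2"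
      define kk where "kk = g2 (\<sigma> (x(1:=0)))"
      define r0 where "r0 = - (hh * ss + kk) / (a * ss)"
      have "(hh + a * r0) * ss + kk = 0"
        using sn a0 unfolding ss_def r0_def by (simp add: field_simps)
      then show False using nz[rule_format, of r0] unfolding hh_def ss_def kk_def by simp
    qed
  qed
  have 2: "2 \<in> V" unfolding V_def by simp
  have "wt_hom_poly V c (c 2) (\<lambda>x. \<sigma> x 2)" using \<sigma>h 2 by blast
  from whp_affine[OF this finV 2 posV order.refl] obtain b where bdef: "\<forall>x. \<sigma> x 2 = \<sigma> (x(2:=0)) 2 + b * x 2"
    by blast
  have \<sigma>2: "\<sigma> x 2 = b * x 2" if "x \<in> cone_pts V" for x
  proof -
    have "\<sigma> (x(2:=0)) 2 = \<sigma> ((x(2:=0))(1:=0)) 2" using ind2 by blast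
    also have "\<dots> = 0" by (rule s2) (use cone_upd[OF that 2] in auto)
    moreover have "\<sigma> x 2 = \<sigma> (x(2:=0)) 2 + b * x 2" using bdef by blast
    ultimately show ?thesis by simp
  qed
  have b0: "b \<noteq> 0"
  proof
    assume b0: "b = 0"
    define e2 where "e2 = z0(2:=1)"
    have e2c: "e2 \<in> cone_pts V" unfolding e2_def using cone_upd[OF z0c] V_def by auto
    have e21: "e2(1:=0) = e2" unfolding e2_def z0_def by auto
    have "\<sigma> (e2(1:=0)) 2 = 0" using \<sigma>2[OF e2c] b0 e21 by simp
    then have eq: "t * 1 + g1 e2 = 0 \<longleftrightarrow> g2 (\<sigma> e2) = 0" for t
      using isoT[OF e2c, of t] e21 unfolding e2_def by simp
    from eq[of "- g1 e2"] eq[of "- g1 e2 + 1"] show False by simp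
  qed
  have rel4: "g2 (\<sigma> (x(1:=0))) = a*b*g1 x - b * x 2 * \<sigma> (x(1:=0)) 1"
    if "x \<in> cone_pts V" "x 2 \<noteq> 0" for x
  proof -
    have "\<sigma> (x(1:=0)) 2 = b * x 2" using \<sigma>2[OF cone_upd[OF that(1), of 1]] V_def by auto
    then have "(\<sigma> (x(1:=0)) 1 + a*(- g1 x / x 2)) * (b * x 2) + g2 (\<sigma> (x(1:=0))) = 0"
      using isoT[OF that(1), of "- g1 x / x 2"] that(2) by simp
    then show ?thesis using that(2) by (intro rel_alg) auto
  qed
  define \<iota> :: "(nat \<Rightarrow> complex) \<Rightarrow> (nat \<Rightarrow> complex)" where
    "\<iota> x = (\<lambda>i. if i \<in> {3,4} then x i else 0)" for x
  have \<iota>c: "\<iota> x \<in> cone_pts V" for x unfolding \<iota>_def cone_pts_def V_def by auto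
  have rel5: "g2 (\<sigma> (\<iota> x)) = a*b*g1 x" for x
  proof -
    define y where "y = \<iota> x"
    define \<phi> where "\<phi> t = g2 (\<sigma> (y(2:=t))) - a*b*g1 x + b * t * \<sigma> (y(2:=t)) 1" for t
    have "\<phi> t = 0" if "t \<noteq> 0" for t
    proof -
      have yc: "y(2:=t) \<in> cone_pts V" using cone_upd[OF \<iota>c] V_def unfolding y_def by auto
      have y1: "(y(2:=t))(1:=0) = y(2:=t)" unfolding y_def \<iota>_def by auto
      have "g1 (y(2:=t)) = g1 x" by (intro g1loc) (auto simp: y_def \<iota>_def)
      then show ?thesis using rel4[OF yc] that y1 unfolding \<phi>_def by simp
    qed
    moreover have "continuous (at 0) \<phi>"
    proof -
      have cu: "continuous (at 0) (\<lambda>t. \<sigma> (y(2:=t)) i)" if "i \<in> V" for i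
      proof -
        have ci: "\<forall>j\<in>V. continuous (at 0) (\<lambda>t. (y(2:=t)) j)"
        proof
          fix j show "continuous (at 0) (\<lambda>t. (y(2:=t)) j)" by (cases "j = 2") auto
        qed
        show ?thesis using whp_cont[OF _ ci] \<sigma>h that by blast
      qed
      have "continuous (at 0) (\<lambda>t. g2 (\<sigma> (y(2:=t))))"
        using whp_cont[OF g2, of "at 0" "\<lambda>t. \<sigma> (y(2:=t))"] cu V_def by auto
      then show ?thesis unfolding \<phi>_def using cu[of 1] V_def by (auto intro!: continuous_intros)
    qed
    ultimately have "\<phi> 0 = 0" using cont_zero by blast
    moreover have "y(2:=0) = y" unfolding y_def \<iota>_def by auto
    ultimately show ?thesis unfolding \<phi>_def y_def by simp
  qed
  define lam where "lam = a * b"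
  have l0: "lam \<noteq> 0" unfolding lam_def using a0 b0 by simp
  obtain t0 where t0: "t0 ^ (c 1 + c 2) = inverse lam" "t0 \<noteq> 0"
    using nth_root_ex[of "inverse lam" "c 1 + c 2"] l0 pos by auto
  define s0 where "s0 = inverse t0"
  define \<tau> where "\<tau> x = (\<lambda>i. if i \<in> {3,4} then t0 ^ c i * \<sigma> (\<iota> x) i else 0)" for x
  define \<tau>' where "\<tau>' y = (\<lambda>i. if i \<in> {3,4} then \<psi> (\<lambda>j. if j \<in> {3,4} then s0 ^ c j * y j else 0) i else 0)" for y
  have geq: "g1 x = g2 (\<tau> x)" for x
  proof -
    have "g2 (\<tau> x) = g2 (\<lambda>i. t0 ^ c i * \<sigma> (\<iota> x) i)" by (intro g2loc) (auto simp: \<tau>_def)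
    also have "\<dots> = t0 ^ (c 1 + c 2) * g2 (\<sigma> (\<iota> x))" by (rule whp_homog[OF g2]) simp
    also have "\<dots> = g1 x" using rel5 t0 l0 unfolding lam_def by (simp add: field_simps)
    finally show ?thesis by simp
  qed
  have \<tau>g: "graded_map {3,4} c \<tau>"
    unfolding graded_map_def
  proof (intro conjI ballI allI impI)
    fix i :: nat assume i: "i \<in> {3,4}"
    have "wt_hom_poly {3,4} c (c i) (\<lambda>x. \<sigma> (\<iota> x) i)"
      unfolding \<iota>_def using whp_restrict[of V c "c i" "\<lambda>x. \<sigma> x i" "{3,4}"] \<sigma>h i finV V_def by auto
    from whp_scal[OF this, of "t0 ^ c i"] show "wt_hom_poly {3,4} c (c i) (\<lambda>x. \<tau> x i)"
      using i unfolding \<tau>_def by simp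
  next
    fix x i assume "i \<notin> {3::nat,4}" then show "\<tau> x i = 0" unfolding \<tau>_def by simp
  qed
  have \<tau>'g: "graded_map {3,4} c \<tau>'"
    unfolding graded_map_def
  proof (intro conjI ballI allI impI)
    fix i :: nat assume i: "i \<in> {3,4}"
    have P: "wt_hom_poly {3,4} c (c i) (\<lambda>x. \<psi> (\<iota> x) i)"
      unfolding \<iota>_def using whp_restrict[of V c "c i" "\<lambda>x. \<psi> x i" "{3,4}"] \<psi>h i finV V_def by auto
    have "(\<lambda>y. \<tau>' y i) = (\<lambda>y. s0 ^ c i * \<psi> (\<iota> y) i)"
    proof
      fix y
      have "\<psi> (\<iota> (\<lambda>j. s0 ^ c j * y j)) i = s0 ^ c i * \<psi> (\<iota> y) i"
        using whp_homog[OF P, of s0 y] by simp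
      moreover have "\<iota> (\<lambda>j. s0 ^ c j * y j) = (\<lambda>j. if j \<in> {3,4} then s0 ^ c j * y j else 0)"
        unfolding \<iota>_def by auto
      ultimately show "\<tau>' y i = s0 ^ c i * \<psi> (\<iota> y) i" using i unfolding \<tau>'_def by simp
    qed
    then show "wt_hom_poly {3,4} c (c i) (\<lambda>y. \<tau>' y i)" using whp_scal[OF P] by simp
  next
    fix x i assume "i \<notin> {3::nat,4}" then show "\<tau>' x i = 0" unfolding \<tau>'_def by simp
  qed
  have inv1: "\<tau>' (\<tau> x) = x" if x: "x \<in> cone_pts {3,4}" for x
  proof
    fix i
    show "\<tau>' (\<tau> x) i = x i"
    proof (cases "i \<in> {3,4}")
      case True
      define z where "z = \<sigma> (\<iota> x)"
      have z2: "z 2 = 0" unfolding z_def using \<sigma>2[OF \<iota>c] unfolding \<iota>_def by simp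
      have w: "(\<lambda>j. if j \<in> {3,4} then s0 ^ c j * \<tau> x j else 0) = z(1:=0)"
      proof
        fix j
        show "(if j \<in> {3,4} then s0 ^ c j * \<tau> x j else 0) = (z(1:=0)) j"
          using z2 \<sigma>c[rule_format, of j "\<iota> x"] t0(2)
          by (auto simp: \<tau>_def z_def s0_def V_def power_mult_distrib[symmetric])
      qed
      have "\<tau>' (\<tau> x) i = \<psi> (z(1:=0)) i" unfolding \<tau>'_def w using True by simp
      also have "\<dots> = \<psi> z i" using ind\<psi>[OF True, of z] by simp
      also have "\<dots> = \<iota> x i" unfolding z_def using inv \<iota>c V_def by auto
      finally show ?thesis using True unfolding \<iota>_def by simp
    next
      case False
      then show ?thesis using x unfolding \<tau>'_def cone_pts_def by simp
    qed
  qed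
  have inv2: "\<tau> (\<tau>' y) = y" if y: "y \<in> cone_pts {3,4}" for y
  proof
    fix i
    show "\<tau> (\<tau>' y) i = y i"
    proof (cases "i \<in> {3,4}")
      case True
      define v where "v = (\<lambda>j. if j \<in> {3,4} then s0 ^ c j * y j else 0)"
      have vc: "v \<in> cone_pts V" unfolding v_def cone_pts_def V_def by auto
      define w where "w = \<psi> v"
      have \<sigma>w: "\<sigma> w = v" unfolding w_def using inv vc V_def by auto
      have "b * w 2 = 0" using \<sigma>2[OF \<psi>cone, of v] \<sigma>w unfolding w_def v_def by simp
      then have w2: "w 2 = 0" using b0 by simp
      have e: "\<iota> (\<tau>' y) = w(1:=0)"
      proof
        fix j
        show "\<iota> (\<tau>' y) j = (w(1:=0)) j"
          using w2 \<psi>c[rule_format, of j v]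
          by (auto simp: \<iota>_def \<tau>'_def w_def v_def V_def)
      qed
      have "\<tau> (\<tau>' y) i = t0 ^ c i * \<sigma> (w(1:=0)) i" unfolding \<tau>_def e using True by simp
      also have "\<dots> = t0 ^ c i * \<sigma> w i" using ind34[OF True, of w] by simp
      also have "\<dots> = t0 ^ c i * (s0 ^ c i * y i)" using True unfolding \<sigma>w v_def by simp
      also have "\<dots> = y i" using t0(2) unfolding s0_def
        by (simp add: mult.assoc[symmetric] power_mult_distrib[symmetric])
      finally show ?thesis .
    next
      case False
      then show ?thesis using y unfolding \<tau>_def cone_pts_def by simp
    qed
  qed
  show ?thesis unfolding wps_aut_def using \<tau>g \<tau>'g inv1 inv2 geq by blast
qed


lemma indep12:
  assumes "wt_hom_poly {1,2,3,4} c d f" "\<forall>i\<in>{1,2,3,4::nat}. c i > 0" "d < c 1" "d < c 2"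
  shows "f x = f (x(1:=0, 2:=0))"
proof -
  have fin: "finite {1,2,3,4::nat}" by simp
  have "\<exists>b. (d < c 1 \<longrightarrow> b = 0) \<and> (\<forall>x. f x = f (x(1:=0)) + b * x 1)"
    by (rule whp_affine[OF assms(1) fin _ assms(2)]) (use assms(3) in simp_all)
  then obtain b1 where b1: "d < c 1 \<longrightarrow> b1 = 0" "\<forall>x. f x = f (x(1:=0)) + b1 * x 1"
    by (elim exE conjE)
  have "\<exists>b. (d < c 2 \<longrightarrow> b = 0) \<and> (\<forall>x. f x = f (x(2:=0)) + b * x 2)"
    by (rule whp_affine[OF assms(1) fin _ assms(2)]) (use assms(4) in simp_all)
  then obtain b2 where b2: "d < c 2 \<longrightarrow> b2 = 0" "\<forall>x. f x = f (x(2:=0)) + b2 * x 2"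
    by (elim exE conjE)
  have "f x = f (x(1:=0))" using b1(2)[rule_format, of x] b1(1) assms(3) by simp
  also have "\<dots> = f (x(1:=0, 2:=0))" using b2(2)[rule_format, of "x(1:=0)"] b2(1) assms(4) by simp
  finally show ?thesis .
qed

theorem lemma3p1:
  fixes c :: "nat \<Rightarrow> nat"
    and g1 g2 :: "(nat \<Rightarrow> complex) \<Rightarrow> complex"
    and \<sigma> :: "(nat \<Rightarrow> complex) \<Rightarrow> (nat \<Rightarrow> complex)"
  assumes pos: "\<forall>i\<in>{1,2,3,4}. c i > 0"
    and c12: "c 1 \<ge> c 2" and c13: "c 1 > c 3" and c14: "c 1 > c 4"
    and g1: "wt_hom_poly {3,4} c (c 1 + c 2) g1"
    and g2: "wt_hom_poly {3,4} c (c 1 + c 2) g2"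
    and \<sigma>: "wps_aut {1,2,3,4} c \<sigma>"
    and iso: "\<forall>x\<in>cone_pts {1,2,3,4}.
               (x 1 * x 2 + g1 x = 0) \<longleftrightarrow> ((\<sigma> x) 1 * (\<sigma> x) 2 + g2 (\<sigma> x) = 0)"
  shows "\<exists>\<tau>. wps_aut {3,4} c \<tau> \<and> (\<forall>x. g1 x = g2 (\<tau> x))"
proof -
  have fin: "finite {1,2,3,4::nat}" by simp
  have \<sigma>g: "graded_map {1,2,3,4} c \<sigma>" using \<sigma> unfolding wps_aut_def by (rule conjunct1)
  have "\<exists>\<psi>. graded_map {1,2,3,4} c \<psi> \<and> (\<forall>x\<in>cone_pts {1,2,3,4}. \<psi> (\<sigma> x) = x \<and> \<sigma> (\<psi> x) = x)"
    using \<sigma> unfolding wps_aut_def by (rule conjunct2)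
  then obtain \<psi> where P\<psi>: "graded_map {1,2,3,4} c \<psi> \<and> (\<forall>x\<in>cone_pts {1,2,3,4}. \<psi> (\<sigma> x) = x \<and> \<sigma> (\<psi> x) = x)"
    by (rule exE)
  have \<psi>g: "graded_map {1,2,3,4} c \<psi>" using P\<psi> by (rule conjunct1)
  have inv: "\<forall>x\<in>cone_pts {1,2,3,4}. \<psi> (\<sigma> x) = x \<and> \<sigma> (\<psi> x) = x" using P\<psi> by (rule conjunct2)
  have \<sigma>h: "\<forall>i\<in>{1,2,3,4}. wt_hom_poly {1,2,3,4} c (c i) (\<lambda>x. \<sigma> x i)"
    and \<sigma>c: "\<forall>x i. i \<notin> {1,2,3,4} \<longrightarrow> \<sigma> x i = 0"
    using \<sigma>g unfolding graded_map_def by auto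
  have \<psi>h: "\<forall>i\<in>{1,2,3,4}. wt_hom_poly {1,2,3,4} c (c i) (\<lambda>x. \<psi> x i)"
    and \<psi>c: "\<forall>x i. i \<notin> {1,2,3,4} \<longrightarrow> \<psi> x i = 0"
    using \<psi>g unfolding graded_map_def by auto
  have h1: "wt_hom_poly {1,2,3,4} c (c 1) (\<lambda>x. \<sigma> x 1)" using \<sigma>h by simp
  have h2: "wt_hom_poly {1,2,3,4} c (c 2) (\<lambda>x. \<sigma> x 2)" using \<sigma>h by simp
  have "\<exists>b. (c 1 < c 1 \<longrightarrow> b = 0) \<and> (\<forall>x. \<sigma> x 1 = \<sigma> (x(1:=0)) 1 + b * x 1)"
    by (rule whp_affine[OF h1 fin _ pos]) simp_all
  then obtain a1 where a1: "\<forall>x. \<sigma> x 1 = \<sigma> (x(1:=0)) 1 + a1 * x 1"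
    by (elim exE conjE)
  have "\<exists>b. (c 2 < c 1 \<longrightarrow> b = 0) \<and> (\<forall>x. \<sigma> x 2 = \<sigma> (x(1:=0)) 2 + b * x 1)"
    by (rule whp_affine[OF h2 fin _ pos]) (use c12 in simp_all)
  then obtain b1 where b1: "c 2 < c 1 \<longrightarrow> b1 = 0" "\<forall>x. \<sigma> x 2 = \<sigma> (x(1:=0)) 2 + b1 * x 1"
    by (elim exE conjE)
  have \<psi>h34: "\<forall>i\<in>{3,4}. wt_hom_poly {1,2,3,4} c (c i) (\<lambda>y. \<psi> y i)" using \<psi>h by simp
  show ?thesis
  proof (cases "c 2 < c 1")
    case True
    have ind2: "\<forall>x. \<sigma> x 2 = \<sigma> (x(1:=0)) 2"
    proof
      fix x show "\<sigma> x 2 = \<sigma> (x(1:=0)) 2" using b1(2)[rule_format, of x] b1(1) True by simp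
    qed
    show ?thesis
      by (rule main[OF pos c13 c14 g1 g2 \<sigma>g \<psi>h34 \<psi>c inv iso ind2 a1])
  next
    case False
    then have ceq: "c 2 = c 1" using c12 by simp
    have "\<exists>b. (c 1 < c 2 \<longrightarrow> b = 0) \<and> (\<forall>x. \<sigma> x 1 = \<sigma> (x(2:=0)) 1 + b * x 2)"
      by (rule whp_affine[OF h1 fin _ pos]) (use ceq in simp_all)
    then obtain a2 where a2: "\<forall>x. \<sigma> x 1 = \<sigma> (x(2:=0)) 1 + a2 * x 2"
      by (elim exE conjE)
    have "\<exists>b. (c 2 < c 2 \<longrightarrow> b = 0) \<and> (\<forall>x. \<sigma> x 2 = \<sigma> (x(2:=0)) 2 + b * x 2)"
      by (rule whp_affine[OF h2 fin _ pos]) simp_all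
    then obtain b2 where b2: "\<forall>x. \<sigma> x 2 = \<sigma> (x(2:=0)) 2 + b2 * x 2"
      by (elim exE conjE)
    have ind34: "\<sigma> x i = \<sigma> (x(1:=0, 2:=0)) i" if "i \<in> {3,4}" for x i
      using indep12[of c "c i" "\<lambda>x. \<sigma> x i"] \<sigma>h that pos c13 c14 ceq by auto
    have ind\<psi>: "\<psi> x i = \<psi> (x(1:=0, 2:=0)) i" if "i \<in> {3,4}" for x i
      using indep12[of c "c i" "\<lambda>x. \<psi> x i"] \<psi>h that pos c13 c14 ceq by auto
    define z0 :: "nat \<Rightarrow> complex" where "z0 = (\<lambda>_. 0)"
    have zz: "z0(1:=0, 2:=0) = z0" unfolding z0_def by auto
    have conez: "z0(1:=u, 2:=v) \<in> cone_pts {1,2,3,4}" for u v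
      unfolding z0_def cone_pts_def by auto
    have g1z: "g1 (z0(1:=u, 2:=v)) = 0" for u v
    proof -
      have "g1 (z0(1:=u, 2:=v)) = g1 z0" by (rule whp_local[OF g1]) simp
      also have "g1 z0 = g1 (\<lambda>i. 0 ^ c i * z0 i)" unfolding z0_def by simp
      also have "\<dots> = 0 ^ (c 1 + c 2) * g1 z0" by (rule whp_homog[OF g1]) simp
      also have "\<dots> = 0" using pos by simp
      finally show ?thesis .
    qed
    have s1: "\<sigma> (z0(1:=u, 2:=v)) 1 = \<sigma> z0 1 + a1 * u + a2 * v" for u v
    proof -
      have "\<sigma> (z0(1:=u, 2:=v)) 1 = \<sigma> (z0(1:=0, 2:=v)) 1 + a1 * u"
        using a1[rule_format, of "z0(1:=u, 2:=v)"] by (simp add: fun_upd_twist)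
      also have "\<sigma> (z0(1:=0, 2:=v)) 1 = \<sigma> z0 1 + a2 * v"
        using a2[rule_format, of "z0(1:=0, 2:=v)"] by (simp add: zz[simplified])
      finally show ?thesis by (simp only: add_ac)
    qed
    have s2: "\<sigma> (z0(1:=u, 2:=v)) 2 = \<sigma> z0 2 + b1 * u + b2 * v" for u v
    proof -
      have "\<sigma> (z0(1:=u, 2:=v)) 2 = \<sigma> (z0(1:=0, 2:=v)) 2 + b1 * u"
        using b1(2)[rule_format, of "z0(1:=u, 2:=v)"] by (simp add: fun_upd_twist)
      also have "\<sigma> (z0(1:=0, 2:=v)) 2 = \<sigma> z0 2 + b2 * v"
        using b2[rule_format, of "z0(1:=0, 2:=v)"] by (simp add: zz[simplified])
      finally show ?thesis by (simp only: add_ac)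
    qed
    have s34: "\<sigma> (z0(1:=u, 2:=v)) i = \<sigma> z0 i" if "i \<in> {3,4}" for u v i
      using ind34[OF that, of "z0(1:=u, 2:=v)"] by (simp add: zz[simplified])
    have G: "(\<sigma> z0 1 + a1 * u + a2 * v) * (\<sigma> z0 2 + b1 * u + b2 * v) + g2 (\<sigma> z0) = 0"
      if "u * v = 0" for u v
    proof -
      have "g2 (\<sigma> (z0(1:=u, 2:=v))) = g2 (\<sigma> z0)" by (rule whp_local[OF g2]) (simp add: s34[simplified])
      then show ?thesis using iso[rule_format, OF conez[of u v]] g1z[of u v] that s1 s2 by simp
    qed
    have "a1 * b1 = 0"
    proof (rule quad_zero[of a1 "\<sigma> z0 1" b1 "\<sigma> z0 2" "g2 (\<sigma> z0)"], rule allI)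
      fix t show "(a1 * t + \<sigma> z0 1) * (b1 * t + \<sigma> z0 2) + g2 (\<sigma> z0) = 0"
        using G[of t 0] by (simp add: algebra_simps)
    qed
    moreover have "a2 * b2 = 0"
    proof (rule quad_zero[of a2 "\<sigma> z0 1" b2 "\<sigma> z0 2" "g2 (\<sigma> z0)"], rule allI)
      fix t show "(a2 * t + \<sigma> z0 1) * (b2 * t + \<sigma> z0 2) + g2 (\<sigma> z0) = 0"
        using G[of 0 t] by (simp add: algebra_simps)
    qed
    moreover have det: "a1 * b2 - a2 * b1 \<noteq> 0"
    proof
      assume d: "a1 * b2 - a2 * b1 = 0"
      obtain u v where uv: "(u, v) \<noteq> (0, 0)" "a1 * u + a2 * v = 0" "b1 * u + b2 * v = 0"
      proof (cases "a1 = 0 \<and> a2 = 0")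
        case True
        show ?thesis
        proof (cases "b1 = 0 \<and> b2 = 0")
          case True
          then show ?thesis using \<open>a1 = 0 \<and> a2 = 0\<close> by (intro that[of 1 0]) auto
        next
          case False
          then show ?thesis using \<open>a1 = 0 \<and> a2 = 0\<close>
            by (intro that[of b2 "- b1"]) (auto simp: algebra_simps)
        qed
      next
        case False
        then show ?thesis using d by (intro that[of a2 "- a1"]) (auto simp: algebra_simps)
      qed
      have "\<sigma> (z0(1:=u, 2:=v)) = \<sigma> z0"
      proof
        fix i
        show "\<sigma> (z0(1:=u, 2:=v)) i = \<sigma> z0 i"
        proof (cases "i \<in> {3,4}")
          case True then show ?thesis by (rule s34)
        next
          case False
          then consider "i = 1" | "i = 2" | "i \<notin> {1,2,3,4}" by auto
          then show ?thesis using s1 s2 uv \<sigma>c by cases (auto simp: add.assoc)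
        qed
      qed
      then have "z0(1:=u, 2:=v) = z0" using inv conez[of u v] conez[of 0 0] unfolding z0_def
        by (metis fun_upd_triv)
      then have "(z0(1:=u, 2:=v)) 1 = z0 1" "(z0(1:=u, 2:=v)) 2 = z0 2" by simp_all
      then show False using uv(1) unfolding z0_def by simp
    qed
    ultimately have "(a2 = 0 \<and> b1 = 0) \<or> (a1 = 0 \<and> b2 = 0)"
      by (metis diff_zero mult_eq_0_iff zero_diff)
    then show ?thesis
    proof
      assume st: "a2 = 0 \<and> b1 = 0"
      have ind2: "\<forall>x. \<sigma> x 2 = \<sigma> (x(1:=0)) 2"
      proof
        fix x show "\<sigma> x 2 = \<sigma> (x(1:=0)) 2" using b1(2)[rule_format, of x] st by simp
      qed
      show ?thesis
        by (rule main[OF pos c13 c14 g1 g2 \<sigma>g \<psi>h34 \<psi>c inv iso ind2 a1])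
    next
      assume sw: "a1 = 0 \<and> b2 = 0"
      define s :: "nat \<Rightarrow> nat" where "s i = (if i = 1 then 2 else if i = 2 then 1 else i)" for i
      have ss: "s (s i) = i" for i unfolding s_def by auto
      have sV: "s i \<in> {1,2,3,4} \<longleftrightarrow> i \<in> {1,2,3,4}" for i unfolding s_def by auto
      have cs: "c (s i) = c i" for i unfolding s_def using ceq by auto
      define \<sigma>' where "\<sigma>' x = (\<lambda>i. \<sigma> x (s i))" for x
      define \<psi>' where "\<psi>' y = \<psi> (\<lambda>i. y (s i))" for y
      have \<sigma>'g: "graded_map {1,2,3,4} c \<sigma>'"
        unfolding graded_map_def
      proof (intro conjI ballI allI impI)
        fix i :: nat assume i: "i \<in> {1,2,3,4}"
        then have "s i \<in> {1,2,3,4}" using sV by blast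
        then show "wt_hom_poly {1,2,3,4} c (c i) (\<lambda>x. \<sigma>' x i)"
          using \<sigma>h cs[of i] unfolding \<sigma>'_def by metis
      next
        fix x i assume "i \<notin> {1::nat,2,3,4}"
        then show "\<sigma>' x i = 0" using \<sigma>c sV unfolding \<sigma>'_def by blast
      qed
      have \<psi>'h: "\<forall>i\<in>{3,4}. wt_hom_poly {1,2,3,4} c (c i) (\<lambda>y. \<psi>' y i)"
      proof
        fix i :: nat assume i: "i \<in> {3,4}"
        have "(\<lambda>y. \<psi>' y i) = (\<lambda>y. \<psi> y i)"
        proof
          fix y
          have "\<psi>' y i = \<psi> ((\<lambda>i. y (s i))(1:=0, 2:=0)) i" unfolding \<psi>'_def using ind\<psi>[OF i] by blast
          also have "(\<lambda>i. y (s i))(1:=0, 2:=0) = y(1:=0, 2:=0)" unfolding s_def by auto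
          also have "\<psi> (y(1:=0, 2:=0)) i = \<psi> y i" using ind\<psi>[OF i] by simp
          finally show "\<psi>' y i = \<psi> y i" .
        qed
        then show "wt_hom_poly {1,2,3,4} c (c i) (\<lambda>y. \<psi>' y i)" using \<psi>h34 i by auto
      qed
      have \<psi>'c: "\<forall>y i. i \<notin> {1,2,3,4} \<longrightarrow> \<psi>' y i = 0" using \<psi>c unfolding \<psi>'_def by blast
      have inv': "\<forall>x\<in>cone_pts {1,2,3,4}. \<psi>' (\<sigma>' x) = x \<and> \<sigma>' (\<psi>' x) = x"
      proof
        fix x assume x: "x \<in> cone_pts {1,2,3,4}"
        have "(\<lambda>i. \<sigma>' x (s i)) = \<sigma> x" unfolding \<sigma>'_def ss by simp
        then have A: "\<psi>' (\<sigma>' x) = x" unfolding \<psi>'_def using inv x by simp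
        have xs: "(\<lambda>i. x (s i)) \<in> cone_pts {1,2,3,4}" using x sV unfolding cone_pts_def by blast
        have "\<sigma>' (\<psi>' x) = (\<lambda>i. (\<lambda>i. x (s i)) (s i))"
          unfolding \<sigma>'_def \<psi>'_def using inv xs by simp
        then have B: "\<sigma>' (\<psi>' x) = x" unfolding ss by simp
        show "\<psi>' (\<sigma>' x) = x \<and> \<sigma>' (\<psi>' x) = x" using A B by simp
      qed
      have iso': "\<forall>x\<in>cone_pts {1,2,3,4}.
               (x 1 * x 2 + g1 x = 0) \<longleftrightarrow> ((\<sigma>' x) 1 * (\<sigma>' x) 2 + g2 (\<sigma>' x) = 0)"
      proof
        fix x assume x: "x \<in> cone_pts {1,2,3,4}"
        have "g2 (\<sigma>' x) = g2 (\<sigma> x)" by (rule whp_local[OF g2]) (simp add: \<sigma>'_def s_def)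
        moreover have "\<sigma>' x 1 = \<sigma> x 2" "\<sigma>' x 2 = \<sigma> x 1" unfolding \<sigma>'_def s_def by simp_all
        ultimately show "(x 1 * x 2 + g1 x = 0) \<longleftrightarrow> ((\<sigma>' x) 1 * (\<sigma>' x) 2 + g2 (\<sigma>' x) = 0)"
          using iso x by (simp add: mult.commute)
      qed
      have ind2': "\<forall>x. \<sigma>' x 2 = \<sigma>' (x(1:=0)) 2"
      proof
        fix x show "\<sigma>' x 2 = \<sigma>' (x(1:=0)) 2"
          using a1[rule_format, of x] sw unfolding \<sigma>'_def s_def by simp
      qed
      have a1': "\<forall>x. \<sigma>' x 1 = \<sigma>' (x(1:=0)) 1 + b1 * x 1"
      proof
        fix x show "\<sigma>' x 1 = \<sigma>' (x(1:=0)) 1 + b1 * x 1"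
          using b1(2)[rule_format, of x] unfolding \<sigma>'_def s_def by simp
      qed
      show ?thesis
        by (rule main[OF pos c13 c14 g1 g2 \<sigma>'g \<psi>'h \<psi>'c inv' iso' ind2' a1'])
    qed
  qed
qed

end
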